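(* Let $\boldsymbol{B}\in\mathbb{R}^{d\times d}$ be a fixed positive definite matrix with eigenvalues $\beta_1,\dots,\beta_d\ge0$, and let $c$ be a positive constant with $c\le\operatorname{tr}(\boldsymbol{B})$. Over positive definite matrices $\boldsymbol{G}\in\mathbb{R}^{d\times d}$ with $\operatorname{tr}(\boldsymbol{G})=c$, the minimum of $\operatorname{tr}(\boldsymbol{G}^{-1}\boldsymbol{B})+\ln\det(\boldsymbol{G})$ is achieved at $\boldsymbol{G}=\boldsymbol{O}^\top\operatorname{Diag}(\alpha_1^*,\dots,\alpha_d^* )\boldsymbol{O}$, where $\boldsymbol{O}$ is any orthogonal matrix with $\boldsymbol{B}=\boldsymbol{O}^\top\operatorname{Diag}(\beta_1,\dots,\beta_d)\boldsymbol{O}$, $$\alpha_i^*=\frac{\sqrt{1-4\lambda^*\beta_i}-1}{-2\lambda^*},$$ and $\lambda^*\le0$ is the unique solution of $\sum_{i=1}^d\frac{2\beta_i}{1+\sqrt{1-4\lambda^*\beta_i}}=c$. *)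

theory Defs
  imports "HOL-Analysis.Analysis"
begin

definition pos_def_matrix :: "real^'n^'n \<Rightarrow> bool" where
  "pos_def_matrix A \<longleftrightarrow> transpose A = A \<and> (\<forall>x. x \<noteq> 0 \<longrightarrow> x \<bullet> (A *v x) > 0)"

definition diag_matrix :: "real^'n \<Rightarrow> real^'n^'n" where
  "diag_matrix v = (\<chi> i j. if i = j then v $ i else 0)"

definition obj :: "real^'n^'n \<Rightarrow> real^'n^'n \<Rightarrow> real" where
  "obj B G = trace (matrix_inv G ** B) + ln (det G)"

text \<open>alpha_i^* = (sqrt(1 - 4 l b) - 1) / (-2 l); at l = 0 the (removable)
  singularity is filled by its limit value b.\<close>
definition alpha_star :: "real \<Rightarrow> real \<Rightarrow> real" where
  "alpha_star l b = (if l = 0 then b else (sqrt (1 - 4 * l * b) - 1) / (-2 * l))"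

end

theory Submission
  imports Defs
begin

lemma matrix_inv_eq:
  fixes A X :: "real^'n^'n"
  assumes "A ** X = mat 1"
  shows "matrix_inv A = X"
proof -
  have XA: "X ** A = mat 1" using assms matrix_left_right_inverse by blast
  let ?P = "\<lambda>Y. A ** Y = mat 1 \<and> Y ** A = mat 1"
  have "?P (matrix_inv A)" unfolding matrix_inv_def
    by (rule someI[of ?P X]) (use assms XA in blast)
  then have "matrix_inv A ** A = mat 1" by blast
  then have "matrix_inv A = matrix_inv A ** (A ** X)" using assms by simp
  also have "\<dots> = X" by (simp add: matrix_mul_assoc \<open>matrix_inv A ** A = mat 1\<close>)
  finally show ?thesis .
qed

lemma matrix_inv_right:
  fixes A :: "real^'n^'n"
  assumes "invertible A"
  shows "A ** matrix_inv A = mat 1"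
proof -
  obtain X where "A ** X = mat 1" using assms unfolding invertible_def by blast
  then show ?thesis using matrix_inv_eq by metis
qed

lemma sym_dot:
  fixes A :: "real^'n^'n"
  assumes "transpose A = A"
  shows "x \<bullet> (A *v y) = (A *v x) \<bullet> y"
  by (metis assms dot_lmul_matrix transpose_matrix_vector)

lemma pd_quad_nonneg:
  assumes "pos_def_matrix A"
  shows "x \<bullet> (A *v x) \<ge> 0"
  using assms unfolding pos_def_matrix_def
  by (cases "x = 0") (auto intro: less_imp_le)

lemma pd_diag_pos:
  assumes "pos_def_matrix A"
  shows "A $ i $ i > 0"
proof -
  have "axis i (1::real) \<noteq> 0" by (simp add: axis_eq_0_iff)
  then have "axis i 1 \<bullet> (A *v axis i 1) > 0" using assms unfolding pos_def_matrix_def by blast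
  moreover have "axis i 1 \<bullet> (A *v axis i 1) = A $ i $ i"
    by (simp add: matrix_vector_mult_basis inner_axis' column_def)
  ultimately show ?thesis by simp
qed

lemma pd_congr:
  fixes M P :: "real^'n^'n"
  assumes "pos_def_matrix M" "invertible P"
  shows "pos_def_matrix (transpose P ** M ** P)"
  unfolding pos_def_matrix_def
proof (intro conjI allI impI)
  have "transpose M = M" using assms(1) pos_def_matrix_def by blast
  then show "transpose (transpose P ** M ** P) = transpose P ** M ** P"
    by (simp add: matrix_transpose_mul matrix_mul_assoc)
next
  fix x :: "real^'n" assume "x \<noteq> 0"
  then have "P *v x \<noteq> 0"
    using inj_matrix_vector_mult[OF assms(2)] by (metis injD matrix_vector_mult_0_right)
  then have "(P *v x) \<bullet> (M *v (P *v x)) > 0" using assms(1) pos_def_matrix_def by blast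
  moreover have "x \<bullet> ((transpose P ** M ** P) *v x) = (P *v x) \<bullet> (M *v (P *v x))"
    by (metis dot_lmul_matrix inner_commute matrix_vector_mul_assoc transpose_matrix_vector)
  ultimately show "x \<bullet> ((transpose P ** M ** P) *v x) > 0" by simp
qed

lemma diag_mult: "diag_matrix a ** diag_matrix b = diag_matrix (\<chi> i. a $ i * b $ i)"
proof -
  have "(\<Sum>k\<in>UNIV. (if i = k then a $ i else 0) * (if k = j then b $ k else 0))
      = (if i = j then a $ i * b $ i else 0)" for i j
  proof -
    have "(\<lambda>k. (if i = k then a $ i else 0) * (if k = j then b $ k else 0))
       = (\<lambda>k. if k = i then (if i = j then a $ i * b $ i else 0) else 0)" by auto
    then show ?thesis by (simp only: sum.delta finite UNIV_I if_True)
  qed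
  then show ?thesis unfolding diag_matrix_def matrix_matrix_mult_def by (simp add: vec_eq_iff)
qed

lemma diag_one: "diag_matrix (\<chi> i. 1) = (mat 1 :: real^'n^'n)"
  unfolding diag_matrix_def mat_def by (simp add: vec_eq_iff)

lemma trace_diag: "trace (diag_matrix a) = sum (\<lambda>i. a $ i) UNIV"
  unfolding diag_matrix_def trace_def by simp

lemma det_diag: "det (diag_matrix (a::real^'n)) = prod (\<lambda>i. a $ i) UNIV"
  by (subst det_diagonal) (auto simp: diag_matrix_def)

lemma pd_diag:
  fixes a :: "real^'n"
  assumes "\<And>i. a $ i > (0::real)"
  shows "pos_def_matrix (diag_matrix a)"
  unfolding pos_def_matrix_def
proof (intro conjI allI impI)
  show "transpose (diag_matrix a) = diag_matrix a"
    by (simp add: diag_matrix_def transpose_def vec_eq_iff)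
next
  fix x :: "real^'n" assume "x \<noteq> 0"
  then obtain k where k: "x $ k \<noteq> 0" by (metis vec_eq_iff zero_index)
  have eq: "x \<bullet> (diag_matrix a *v x) = (\<Sum>i\<in>UNIV. a $ i * (x $ i)^2)"
    unfolding diag_matrix_def inner_vec_def matrix_vector_mult_def
    by (simp add: if_distrib if_distribR sum.delta power2_eq_square mult_ac cong: if_cong)
  have "(\<Sum>i\<in>UNIV. a $ i * (x $ i)^2) > 0"
  proof (rule sum_pos2[of UNIV k])
    show "0 < a $ k * (x $ k)\<^sup>2" using assms k by simp
  qed (auto intro!: mult_nonneg_nonneg simp: less_imp_le[OF assms])
  then show "x \<bullet> (diag_matrix a *v x) > 0" using eq by simp
qed

lemma trace_conj:
  fixes Q X :: "real^'n^'n"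
  assumes "Q ** transpose Q = mat 1"
  shows "trace (transpose Q ** X ** Q) = trace X"
proof -
  have "trace (transpose Q ** X ** Q) = trace (Q ** (transpose Q ** X))"
    by (subst trace_mul_sym) (simp add: matrix_mul_assoc)
  also have "\<dots> = trace X" by (simp add: matrix_mul_assoc assms)
  finally show ?thesis .
qed

lemma det_conj:
  fixes Q X :: "real^'n^'n"
  assumes "transpose Q ** Q = mat 1"
  shows "det (transpose Q ** X ** Q) = det X"
proof -
  have "det (transpose Q) * det Q = 1" using assms by (metis det_I det_mul)
  then show ?thesis by (simp add: det_mul)
qed

lemma pd_sym_entry:
  assumes "pos_def_matrix M"
  shows "M $ a $ b = M $ b $ a"
proof -
  have "transpose M = M" using assms pos_def_matrix_def by blast
  then have "transpose M $ a $ b = M $ a $ b" by simp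
  then show ?thesis by (simp add: transpose_def)
qed

lemma elim_step:
  fixes M :: "real^'n^'n"
  assumes pd: "pos_def_matrix M"
  shows "\<exists>M1. pos_def_matrix M1 \<and> det M1 = det M \<and> M1$j$j = M$j$j \<and>
     (\<forall>i. i \<noteq> j \<longrightarrow> M1$i$j = 0 \<and> M1$j$i = 0) \<and>
     (\<forall>a b. a \<noteq> j \<longrightarrow> b \<noteq> j \<longrightarrow> M1$a$b = M$a$b - M$a$j * M$j$b / M$j$j)"
proof -
  define d where "d = M$j$j"
  have d: "d > 0" using pd_diag_pos[OF pd] d_def by simp
  have sym: "M$a$b = M$b$a" for a b using pd_sym_entry[OF pd] .
  define u :: "real^'n" where "u = (\<chi> a. if a = j then 0 else M$a$j / d)"
  define E :: "real^'n^'n" where "E = mat 1 - (\<chi> a b. if b = j then u$a else 0)"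
  have Eab: "E$a$b = (if a = b then 1 else 0) - (if b = j then u$a else 0)" for a b
    by (simp add: E_def mat_def)
  have EM: "(E ** M)$a$c = M$a$c - u$a * M$j$c" for a c
  proof -
    have "(\<Sum>b\<in>UNIV. E$a$b * M$b$c) = (\<Sum>b\<in>UNIV. (if b = a then M$a$c else 0) - (if b = j then u$a * M$j$c else 0))"
      by (rule sum.cong) (auto simp: Eab left_diff_distrib)
    then show ?thesis unfolding matrix_matrix_mult_def by (simp add: sum_subtractf)
  qed
  have EME: "(E ** M ** transpose E)$a$b = (E ** M)$a$b - u$b * (E ** M)$a$j" for a b
  proof -
    have "(\<Sum>c\<in>UNIV. (E ** M)$a$c * transpose E $c$b) = (\<Sum>c\<in>UNIV. (if c = b then (E ** M)$a$b else 0) - (if c = j then u$b * (E ** M)$a$j else 0))"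
      by (rule sum.cong) (auto simp: Eab transpose_def right_diff_distrib)
    then show ?thesis unfolding matrix_matrix_mult_def[of "E ** M"] by (simp add: sum_subtractf)
  qed
  define M1 where "M1 = E ** M ** transpose E"
  have M1ab: "M1$a$b = M$a$b - u$a * M$j$b - u$b * (M$a$j - u$a * d)" for a b
    unfolding M1_def EME EM d_def by simp
  have uj: "u$j = 0" by (simp add: u_def)
  have ua: "a \<noteq> j \<Longrightarrow> u$a = M$a$j / d" for a by (simp add: u_def)
  have detE: "det (transpose E) = 1"
  proof -
    have rowI: "row k (mat 1 :: real^'n^'n) = axis k 1" for k
      by (simp add: row_def mat_def axis_def vec_eq_iff)
    have TE: "transpose E = (\<chi> k. if k = j then row j (mat 1) + (- u) else row k (mat 1 :: real^'n^'n))"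
      by (auto simp: vec_eq_iff transpose_def Eab rowI axis_def uj)
    have hS: "(\<Sum>k\<in>UNIV. ((- u)$k) *s axis k 1) \<in> vec.span {row k (mat 1 :: real^'n^'n) |k. k \<noteq> j}"
    proof (rule vec.span_sum)
      fix k assume "k \<in> (UNIV :: 'n set)"
      show "((- u)$k) *s axis k 1 \<in> vec.span {row k (mat 1 :: real^'n^'n) |k. k \<noteq> j}"
      proof (cases "k = j")
        case True then show ?thesis by (simp add: uj vec.span_zero)
      next
        case False
        then have "axis k 1 \<in> vec.span {row k (mat 1 :: real^'n^'n) |k. k \<noteq> j}"
          by (intro vec.span_base) (auto simp: rowI)
        then show ?thesis by (rule vec.span_scale)
      qed
    qed
    have "- u \<in> vec.span {row k (mat 1 :: real^'n^'n) |k. k \<noteq> j}"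
      using hS unfolding basis_expansion .
    from det_row_span[OF this]
    have "det (\<chi> k. if k = j then row j (mat 1) + (- u) else row k (mat 1 :: real^'n^'n)) = det (mat 1 :: real^'n^'n)"
      by simp
    then show ?thesis using TE by simp
  qed
  have inv: "invertible (transpose E)" unfolding invertible_det_nz using detE by simp
  have "pos_def_matrix (transpose (transpose E) ** M ** transpose E)"
    by (rule pd_congr[OF pd inv])
  then have pd1: "pos_def_matrix M1" by (simp add: M1_def)
  have det1: "det M1 = det M" using detE by (simp add: M1_def det_mul)
  show ?thesis
  proof (intro exI[of _ M1] conjI allI impI)
    show "M1$j$j = M$j$j" using M1ab[of j j] uj d_def by simp
  next
    fix i assume "i \<noteq> j"
    then show "M1$i$j = 0" using M1ab[of i j] uj ua[of i] d d_def by (simp add: field_simps)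
  next
    fix i assume "i \<noteq> j"
    then show "M1$j$i = 0" using M1ab[of j i] uj ua[of i] d sym[of i j] d_def by (simp add: field_simps)
  next
    fix a b assume "a \<noteq> j" "b \<noteq> j"
    then show "M1$a$b = M$a$b - M$a$j * M$j$b / M$j$j"
      using M1ab[of a b] ua[of a] ua[of b] d sym[of b j] d_def by (simp add: field_simps)
  qed (use pd1 det1 in auto)
qed

lemma elim_all:
  fixes K :: "real^'n^'n"
  assumes pd: "pos_def_matrix K" and fin: "finite S"
  shows "\<exists>M. pos_def_matrix M \<and> det M = det K \<and> (\<forall>i. M$i$i \<le> K$i$i) \<and>
           (\<forall>a b. a \<noteq> b \<and> (a \<in> S \<or> b \<in> S) \<longrightarrow> M$a$b = 0)"
  using fin
proof (induction S rule: finite_induct)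
  case empty
  show ?case using pd by (intro exI[of _ K]) auto
next
  case (insert j S)
  then obtain M where pdM: "pos_def_matrix M" and dM: "det M = det K"
    and diagM: "\<forall>i. M$i$i \<le> K$i$i"
    and zM: "\<forall>a b. a \<noteq> b \<and> (a \<in> S \<or> b \<in> S) \<longrightarrow> M$a$b = 0" by blast
  obtain M1 where pd1: "pos_def_matrix M1" and d1: "det M1 = det M" and jj: "M1$j$j = M$j$j"
    and z1: "\<forall>i. i \<noteq> j \<longrightarrow> M1$i$j = 0 \<and> M1$j$i = 0"
    and f1: "\<forall>a b. a \<noteq> j \<longrightarrow> b \<noteq> j \<longrightarrow> M1$a$b = M$a$b - M$a$j * M$j$b / M$j$j"
    using elim_step[OF pdM, of j] by blast
  have dj: "M$j$j > 0" using pd_diag_pos[OF pdM] .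
  show ?case
  proof (intro exI[of _ M1] conjI allI impI)
    show "det M1 = det K" using d1 dM by simp
    show "pos_def_matrix M1" by (rule pd1)
  next
    fix i
    show "M1$i$i \<le> K$i$i"
    proof (cases "i = j")
      case True then show ?thesis using jj diagM by simp
    next
      case False
      have "M1$i$i = M$i$i - (M$i$j)^2 / M$j$j"
        using f1 False pd_sym_entry[OF pdM, of j i] by (simp add: power2_eq_square)
      also have "\<dots> \<le> M$i$i" using dj by simp
      finally show ?thesis using diagM by (meson order_trans)
    qed
  next
    fix a b assume ab: "a \<noteq> b \<and> (a \<in> insert j S \<or> b \<in> insert j S)"
    show "M1$a$b = 0"
    proof (cases "a = j \<or> b = j")
      case True then show ?thesis using z1 ab by auto
    next
      case False
      then have eq: "M1$a$b = M$a$b - M$a$j * M$j$b / M$j$j" using f1 by blast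
      from ab False have "a \<in> S \<or> b \<in> S" by auto
      then show ?thesis
      proof
        assume "a \<in> S"
        then have "M$a$b = 0" "M$a$j = 0" using zM ab False by auto
        then show ?thesis using eq by simp
      next
        assume "b \<in> S"
        then have "M$a$b = 0" "M$j$b = 0" using zM ab False by auto
        then show ?thesis using eq by simp
      qed
    qed
  qed
qed

lemma hadamard:
  fixes K :: "real^'n^'n"
  assumes pd: "pos_def_matrix K"
  shows "0 < det K \<and> det K \<le> prod (\<lambda>i. K$i$i) UNIV"
proof -
  obtain M where pdM: "pos_def_matrix M" and dM: "det M = det K"
    and diagM: "\<forall>i. M$i$i \<le> K$i$i"
    and zM: "\<forall>a b. a \<noteq> b \<longrightarrow> M$a$b = 0"
    using elim_all[OF pd, of UNIV] by auto
  have detM: "det M = prod (\<lambda>i. M$i$i) UNIV" by (rule det_diagonal) (use zM in auto)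
  have pos: "M$i$i > 0" for i using pd_diag_pos[OF pdM] .
  have "0 < prod (\<lambda>i. M$i$i) UNIV" by (rule prod_pos) (use pos in auto)
  moreover have "prod (\<lambda>i. M$i$i) UNIV \<le> prod (\<lambda>i. K$i$i) UNIV"
    by (rule prod_mono) (use pos diagM less_imp_le in auto)
  ultimately show ?thesis using detM dM by simp
qed

lemma pd_inv:
  fixes H :: "real^'n^'n"
  assumes pd: "pos_def_matrix H"
  shows "invertible H \<and> H ** matrix_inv H = mat 1 \<and> matrix_inv H ** H = mat 1 \<and> pos_def_matrix (matrix_inv H)"
proof -
  have "det H \<noteq> 0" using hadamard[OF pd] by simp
  then have inv: "invertible H" using invertible_det_nz by blast
  have r: "H ** matrix_inv H = mat 1" by (rule matrix_inv_right[OF inv])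
  then have l: "matrix_inv H ** H = mat 1" using matrix_left_right_inverse by blast
  have symH: "transpose H = H" using pd pos_def_matrix_def by blast
  let ?G = "matrix_inv H"
  have "transpose ?G ** H = mat 1"
    using r by (metis matrix_transpose_mul symH transpose_mat)
  then have "H ** transpose ?G = mat 1" using matrix_left_right_inverse by blast
  then have symG: "transpose ?G = ?G" using matrix_inv_eq by metis
  have "pos_def_matrix ?G" unfolding pos_def_matrix_def
  proof (intro conjI allI impI symG)
    fix x :: "real^'n" assume x: "x \<noteq> 0"
    define y where "y = ?G *v x"
    have Hy: "H *v y = x" by (simp add: y_def matrix_vector_mul_assoc r)
    then have "y \<noteq> 0" using x by auto
    then have "y \<bullet> (H *v y) > 0" using pd pos_def_matrix_def by blast
    also have "y \<bullet> (H *v y) = x \<bullet> (?G *v x)"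
    proof -
      have "y \<bullet> (H *v y) = y \<bullet> x" by (simp only: Hy)
      then show ?thesis by (simp add: y_def inner_commute)
    qed
    finally show "x \<bullet> (?G *v x) > 0" .
  qed
  then show ?thesis using inv r l by blast
qed

lemma cs_inv:
  fixes H G :: "real^'n^'n"
  assumes pdH: "pos_def_matrix H" and pdG: "pos_def_matrix G" and GH: "G ** H = mat 1"
  shows "G$i$i * H$i$i \<ge> 1"
proof -
  have HG: "H ** G = mat 1" using GH matrix_left_right_inverse by blast
  have symH: "transpose H = H" using pdH pos_def_matrix_def by blast
  define e :: "real^'n" where "e = axis i 1"
  define z where "z = G *v e"
  have Hz: "H *v z = e" by (simp add: z_def matrix_vector_mul_assoc HG)
  have gpos: "G$i$i > 0" using pd_diag_pos[OF pdG] .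
  have ee: "e \<bullet> e = 1" by (simp add: e_def inner_axis)
  have eHe: "e \<bullet> (H *v e) = H$i$i"
    by (simp add: e_def matrix_vector_mult_basis inner_axis' column_def)
  have zHe: "z \<bullet> (H *v e) = 1" using sym_dot[OF symH, of z e] Hz ee by simp
  have eHz: "e \<bullet> (H *v z) = 1" using Hz ee by simp
  have ze: "z \<bullet> e = G$i$i"
    by (simp add: z_def e_def matrix_vector_mult_basis inner_axis column_def)
  define t where "t = 1 / G$i$i"
  have "0 \<le> (e - t *s z) \<bullet> (H *v (e - t *s z))" by (rule pd_quad_nonneg[OF pdH])
  also have "(e - t *s z) \<bullet> (H *v (e - t *s z)) = e \<bullet> (H *v e) - t * (e \<bullet> (H *v z)) - t * (z \<bullet> (H *v e)) + t * t * (z \<bullet> (H *v z))"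
    by (simp add: scalar_mult_eq_scaleR matrix_vector_mult_diff_distrib matrix_vector_mult_scaleR
        inner_diff_left inner_diff_right algebra_simps)
  also have "\<dots> = H$i$i - 2 * t + t * t * G$i$i"
    using eHe eHz zHe Hz ze by (simp add: inner_commute)
  also have "\<dots> = H$i$i - 1 / G$i$i" using gpos by (simp add: t_def field_simps)
  finally have "1 / G$i$i \<le> H$i$i" by simp
  then show ?thesis using gpos by (simp add: field_simps)
qed

lemma phi_min:
  fixes l a \<alpha> \<beta> :: real
  assumes l: "l \<le> 0" and ap: "\<alpha> > 0" and eq: "\<alpha> - l * \<alpha>^2 = \<beta>" and a: "a > 0"
  shows "\<beta>/\<alpha> + ln \<alpha> - l * \<alpha> \<le> \<beta>/a + ln a - l * a"
proof -
  have "ln (\<alpha>/a) \<le> \<alpha>/a - 1" using ap a by (intro ln_le_minus_one) simp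
  then have lnineq: "ln \<alpha> - ln a \<le> \<alpha>/a - 1" using ap a by (simp add: ln_div)
  have key: "\<beta>/a - \<beta>/\<alpha> + 1 - \<alpha>/a - l*a + l*\<alpha> = - l * (a-\<alpha>)^2 / a"
    using ap a unfolding eq[symmetric] by (simp add: field_simps power2_eq_square)
  have "- l * (a-\<alpha>)^2 / a \<ge> 0" using l a by (intro divide_nonneg_pos mult_nonneg_nonneg) auto
  then show ?thesis using key lnineq by linarith
qed

lemma alpha_facts:
  fixes l b :: real
  assumes l: "l \<le> 0" and b: "b > 0"
  shows "alpha_star l b = 2*b / (1 + sqrt (1 - 4*l*b)) \<and> alpha_star l b > 0 \<and>
         alpha_star l b - l * (alpha_star l b)^2 = b"
proof (cases "l = 0")
  case True then show ?thesis using b by (simp add: alpha_star_def)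
next
  case False
  then have ln: "l < 0" using l by simp
  define s where "s = sqrt (1 - 4*l*b)"
  have "4*l*b \<le> 0" using ln b by (simp add: mult_le_0_iff)
  then have arg: "1 - 4*l*b \<ge> 1" by linarith
  then have s1: "s \<ge> 1" by (simp add: s_def)
  have ss: "s^2 = 1 - 4*l*b" unfolding s_def by (rule real_sqrt_pow2) (use arg in linarith)
  have as: "alpha_star l b = (s - 1) / (-2*l)" using False by (simp add: alpha_star_def s_def)
  have e1: "(s - 1) / (-2*l) = 2*b / (1 + s)"
    using ln s1 ss by (simp add: field_simps power2_eq_square)
  have pos: "2*b/(1+s) > 0" using b s1 by simp
  have ss': "s * s = 1 - 4*l*b" using ss by (simp add: power2_eq_square)
  have e2: "(s - 1) / (-2*l) - l * ((s - 1) / (-2*l))^2 = b"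
    using ln by (simp add: field_simps power2_eq_square ss')
  show ?thesis using as e1 e2 pos by (simp add: s_def)
qed

lemma term_mono:
  fixes l1 l2 b :: real
  assumes "l1 < l2" "l2 \<le> 0" "b > 0"
  shows "2*b / (1 + sqrt (1 - 4*l1*b)) < 2*b / (1 + sqrt (1 - 4*l2*b))"
proof -
  have "1 - 4*l2*b < 1 - 4*l1*b" using assms by simp
  then have s: "sqrt (1 - 4*l2*b) < sqrt (1 - 4*l1*b)" by simp
  have "4*l2*b \<le> 0" using assms by (simp add: mult_le_0_iff)
  then have "1 - 4*l2*b \<ge> 0" by linarith
  then have "sqrt (1 - 4*l2*b) \<ge> 0" by simp
  then have p2: "0 < 1 + sqrt (1 - 4*l2*b)" by linarith
  have p1: "0 < 1 + sqrt (1 - 4*l1*b)" using s p2 by linarith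
  show ?thesis using s assms(3) p1 p2 by (intro divide_strict_left_mono mult_pos_pos) auto
qed

lemma trace_mul_diag:
  fixes H :: "real^'n^'n"
  shows "trace (H ** diag_matrix b) = (\<Sum>i\<in>UNIV. H$i$i * b$i)"
proof -
  have "(H ** diag_matrix b)$i$i = H$i$i * b$i" for i
  proof -
    have "(\<Sum>k\<in>UNIV. H$i$k * diag_matrix b $k$i) = (\<Sum>k\<in>UNIV. if k = i then H$i$i * b$i else 0)"
      by (rule sum.cong) (auto simp: diag_matrix_def)
    then show ?thesis unfolding matrix_matrix_mult_def by simp
  qed
  then show ?thesis unfolding trace_def by simp
qed

lemma part2_lemma:
  fixes B Q :: "real^'n^'n" and \<beta> :: "real^'n" and c l :: real
  assumes QtQ: "transpose Q ** Q = mat 1" and QQt: "Q ** transpose Q = mat 1"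
    and BD: "B = transpose Q ** diag_matrix \<beta> ** Q"
    and bpos: "\<And>i. \<beta>$i > 0"
    and l: "l \<le> 0"
    and fl: "(\<Sum>i\<in>UNIV. 2 * \<beta> $ i / (1 + sqrt (1 - 4 * l * \<beta> $ i))) = c"
  shows "pos_def_matrix (transpose Q ** diag_matrix (\<chi> i. alpha_star l (\<beta> $ i)) ** Q) \<and>
        trace (transpose Q ** diag_matrix (\<chi> i. alpha_star l (\<beta> $ i)) ** Q) = c \<and>
        (\<forall>G. pos_def_matrix G \<and> trace G = c \<longrightarrow>
           obj B (transpose Q ** diag_matrix (\<chi> i. alpha_star l (\<beta> $ i)) ** Q) \<le> obj B G)"
proof -
  have invQ: "invertible Q" using QtQ QQt invertible_def by blast
  have invQt: "invertible (transpose Q)" using QtQ QQt invertible_def by (metis transpose_transpose)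
  define \<alpha> :: "real^'n" where "\<alpha> = (\<chi> i. alpha_star l (\<beta> $ i))"
  have af0: "\<alpha>$i = alpha_star l (\<beta>$i)" for i by (simp add: \<alpha>_def)
  have af1: "\<alpha>$i = 2 * \<beta> $ i / (1 + sqrt (1 - 4 * l * \<beta> $ i))" for i
    using alpha_facts[OF l bpos[of i]] unfolding af0 by blast
  have af2: "\<alpha>$i > 0" for i
    using alpha_facts[OF l bpos[of i]] unfolding af0 by blast
  have af3: "\<alpha>$i - l * (\<alpha>$i)^2 = \<beta>$i" for i
    using alpha_facts[OF l bpos[of i]] unfolding af0 by blast
  note af = af1 af2 af3
  have asum: "(\<Sum>i\<in>UNIV. \<alpha>$i) = c" using fl af(1) by simp
  define A where "A = diag_matrix \<alpha>"
  define G0 where "G0 = transpose Q ** A ** Q"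
  have pdA: "pos_def_matrix A" unfolding A_def by (rule pd_diag) (rule af(2))
  have "pos_def_matrix (transpose Q ** A ** Q)" by (rule pd_congr[OF pdA invQ])
  then have pdG0: "pos_def_matrix G0" by (simp add: G0_def)
  have trG0: "trace G0 = c" unfolding G0_def using trace_conj[OF QQt, of A] asum by (simp add: A_def trace_diag)
  define A' where "A' = diag_matrix (\<chi> i. 1 / \<alpha>$i)"
  have AA': "A ** A' = mat 1"
  proof -
    have "(\<chi> i. \<alpha>$i * (\<chi> i. 1 / \<alpha>$i)$i) = (\<chi> i. (1::real))"
      using af(2) by (simp add: vec_eq_iff) (metis less_irrefl)
    then show ?thesis by (simp add: A_def A'_def diag_mult diag_one)
  qed
  have invG0: "matrix_inv G0 = transpose Q ** A' ** Q"
  proof (rule matrix_inv_eq)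
    have "G0 ** (transpose Q ** A' ** Q) = transpose Q ** A ** (Q ** transpose Q) ** A' ** Q"
      by (simp add: G0_def matrix_mul_assoc)
    also have "\<dots> = transpose Q ** (A ** A') ** Q" by (simp add: QQt matrix_mul_assoc)
    also have "\<dots> = mat 1" by (simp add: AA' QtQ)
    finally show "G0 ** (transpose Q ** A' ** Q) = mat 1" .
  qed
  have tr0: "trace (matrix_inv G0 ** B) = (\<Sum>i\<in>UNIV. \<beta>$i / \<alpha>$i)"
  proof -
    have "matrix_inv G0 ** B = transpose Q ** A' ** (Q ** transpose Q) ** diag_matrix \<beta> ** Q"
      by (simp add: invG0 BD matrix_mul_assoc)
    also have "\<dots> = transpose Q ** (A' ** diag_matrix \<beta>) ** Q" by (simp add: QQt matrix_mul_assoc)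
    finally have "trace (matrix_inv G0 ** B) = trace (A' ** diag_matrix \<beta>)"
      using trace_conj[OF QQt] by simp
    also have "\<dots> = (\<Sum>i\<in>UNIV. \<beta>$i / \<alpha>$i)" by (simp add: A'_def diag_mult trace_diag)
    finally show ?thesis .
  qed
  have det0: "det G0 = (\<Prod>i\<in>UNIV. \<alpha>$i)" unfolding G0_def using det_conj[OF QtQ] by (simp add: A_def det_diag)
  have ln0: "ln (det G0) = (\<Sum>i\<in>UNIV. ln (\<alpha>$i))" unfolding det0
    by (rule ln_prod) (simp_all add: af2[THEN less_imp_neq, symmetric])
  have obj0: "obj B G0 = (\<Sum>i\<in>UNIV. \<beta>$i / \<alpha>$i + ln (\<alpha>$i))"
    unfolding obj_def tr0 ln0 by (simp add: sum.distrib)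
  have main: "obj B G0 \<le> obj B G" if pdG: "pos_def_matrix G" and trG: "trace G = c" for G
  proof -
    define G' where "G' = Q ** G ** transpose Q"
    have "pos_def_matrix (transpose (transpose Q) ** G ** transpose Q)" by (rule pd_congr[OF pdG invQt])
    then have pdG': "pos_def_matrix G'" by (simp add: G'_def)
    have GG': "G = transpose Q ** G' ** Q"
    proof -
      have "transpose Q ** G' ** Q = (transpose Q ** Q) ** G ** (transpose Q ** Q)"
        by (simp add: G'_def matrix_mul_assoc)
      then show ?thesis by (simp add: QtQ)
    qed
    have QtQ': "transpose Q ** transpose (transpose Q) = mat 1" using QtQ by simp
    have trG': "trace G' = c"
      using trace_conj[OF QtQ', of G] trG by (simp add: G'_def)
    define H where "H = matrix_inv G'"
    have pdH: "pos_def_matrix H" and G'H: "G' ** H = mat 1" and HG': "H ** G' = mat 1"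
      using pd_inv[OF pdG'] by (simp_all add: H_def)
    have invG: "matrix_inv G = transpose Q ** H ** Q"
    proof (rule matrix_inv_eq)
      have "G ** (transpose Q ** H ** Q) = transpose Q ** G' ** (Q ** transpose Q) ** H ** Q"
        by (simp add: GG' matrix_mul_assoc)
      also have "\<dots> = transpose Q ** (G' ** H) ** Q" by (simp add: QQt matrix_mul_assoc)
      also have "\<dots> = mat 1" by (simp add: G'H QtQ)
      finally show "G ** (transpose Q ** H ** Q) = mat 1" .
    qed
    have trH: "trace (matrix_inv G ** B) = (\<Sum>i\<in>UNIV. H$i$i * \<beta>$i)"
    proof -
      have "matrix_inv G ** B = transpose Q ** H ** (Q ** transpose Q) ** diag_matrix \<beta> ** Q"
        by (simp add: invG BD matrix_mul_assoc)
      also have "\<dots> = transpose Q ** (H ** diag_matrix \<beta>) ** Q" by (simp add: QQt matrix_mul_assoc)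
      finally have "trace (matrix_inv G ** B) = trace (H ** diag_matrix \<beta>)"
        using trace_conj[OF QQt] by simp
      then show ?thesis by (simp add: trace_mul_diag)
    qed
    have hd: "0 < det H" "det H \<le> (\<Prod>i\<in>UNIV. H$i$i)" using hadamard[OF pdH] by auto
    have Hpos: "H$i$i > 0" for i using pd_diag_pos[OF pdH] .
    have detG: "det G = det G'" using det_conj[OF QtQ] GG' by simp
    have "det G' * det H = 1" using G'H by (metis det_I det_mul)
    then have detG2: "det G = 1 / det H" using detG hd(1) by (simp add: field_simps)
    have "ln (det H) \<le> ln (\<Prod>i\<in>UNIV. H$i$i)" using hd by simp
    also have "\<dots> = (\<Sum>i\<in>UNIV. ln (H$i$i))" by (rule ln_prod) (simp_all add: Hpos[THEN less_imp_neq, symmetric])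
    finally have lnH: "ln (det H) \<le> (\<Sum>i\<in>UNIV. ln (H$i$i))" .
    have lnG: "ln (det G) = - ln (det H)" using detG2 hd(1) by (simp add: ln_div)
    define a :: "real^'n" where "a = (\<chi> i. 1 / H$i$i)"
    have apos: "a$i > 0" for i using Hpos[of i] by (simp add: a_def)
    have aG: "a$i \<le> G'$i$i" for i
    proof -
      have "G'$i$i * H$i$i \<ge> 1" by (rule cs_inv[OF pdH pdG' G'H])
      then show ?thesis using Hpos[of i] by (simp add: a_def field_simps)
    qed
    have asumle: "(\<Sum>i\<in>UNIV. a$i) \<le> c"
    proof -
      have "(\<Sum>i\<in>UNIV. a$i) \<le> (\<Sum>i\<in>UNIV. G'$i$i)" by (rule sum_mono) (rule aG)
      then show ?thesis using trG' by (simp add: trace_def)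
    qed
    have lowG: "(\<Sum>i\<in>UNIV. \<beta>$i / a$i + ln (a$i)) \<le> obj B G"
    proof -
      have "(\<Sum>i\<in>UNIV. \<beta>$i / a$i + ln (a$i)) = (\<Sum>i\<in>UNIV. H$i$i * \<beta>$i) - (\<Sum>i\<in>UNIV. ln (H$i$i))"
      proof -
        have "\<beta>$i / a$i + ln (a$i) = H$i$i * \<beta>$i - ln (H$i$i)" for i
          using Hpos[of i] by (simp add: a_def ln_div)
        then have "(\<Sum>i\<in>UNIV. \<beta>$i / a$i + ln (a$i)) = (\<Sum>i\<in>UNIV. H$i$i * \<beta>$i - ln (H$i$i))"
          by simp
        then show ?thesis by (simp add: sum_subtractf)
      qed
      also have "\<dots> \<le> (\<Sum>i\<in>UNIV. H$i$i * \<beta>$i) + ln (det G)" using lnH lnG by simp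
      also have "\<dots> = obj B G" by (simp add: obj_def trH)
      finally show ?thesis .
    qed
    have phi: "\<beta>$i/\<alpha>$i + ln (\<alpha>$i) - l * \<alpha>$i \<le> \<beta>$i/a$i + ln (a$i) - l * a$i" for i
      by (rule phi_min[OF l af(2) af(3) apos])
    have "(\<Sum>i\<in>UNIV. \<beta>$i/\<alpha>$i + ln (\<alpha>$i) - l * \<alpha>$i) \<le> (\<Sum>i\<in>UNIV. \<beta>$i/a$i + ln (a$i) - l * a$i)"
      by (rule sum_mono) (rule phi)
    then have "obj B G0 - l * c \<le> (\<Sum>i\<in>UNIV. \<beta>$i/a$i + ln (a$i)) - l * (\<Sum>i\<in>UNIV. a$i)"
      unfolding obj0 asum[symmetric] by (simp add: sum_subtractf sum_distrib_left)
    moreover have "l * c \<le> l * (\<Sum>i\<in>UNIV. a$i)" using l asumle by (simp add: mult_left_mono_neg)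
    ultimately show ?thesis using lowG by linarith
  qed
  show ?thesis using pdG0 trG0 main by (simp add: G0_def A_def \<alpha>_def)
qed

theorem lemma9:
  fixes B Q :: "real^'n^'n" and \<beta> :: "real^'n" and c :: real
  assumes "pos_def_matrix B"
    and "orthogonal_matrix Q"
    and "B = transpose Q ** diag_matrix \<beta> ** Q"
    and "\<forall>i. \<beta> $ i \<ge> 0"
    and "0 < c" and "c \<le> trace B"
  shows "(\<exists>!l. l \<le> 0 \<and> (\<Sum>i\<in>UNIV. 2 * \<beta> $ i / (1 + sqrt (1 - 4 * l * \<beta> $ i))) = c) \<and>
    (\<forall>l. l \<le> 0 \<and> (\<Sum>i\<in>UNIV. 2 * \<beta> $ i / (1 + sqrt (1 - 4 * l * \<beta> $ i))) = c \<longrightarrow>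
      (let G\<^sub>0 = transpose Q ** diag_matrix (\<chi> i. alpha_star l (\<beta> $ i)) ** Q in
        pos_def_matrix G\<^sub>0 \<and> trace G\<^sub>0 = c \<and>
        (\<forall>G. pos_def_matrix G \<and> trace G = c \<longrightarrow> obj B G\<^sub>0 \<le> obj B G)))"
proof -
  note pdB = assms(1)
  have QtQ: "transpose Q ** Q = mat 1" and QQt: "Q ** transpose Q = mat 1"
    using assms(2) orthogonal_matrix_def by auto
  have invQ: "invertible Q" using QtQ QQt invertible_def by blast
  have invQt: "invertible (transpose Q)" using QtQ QQt invertible_def by (metis transpose_transpose)
  define D where "D = diag_matrix \<beta>"
  have BD: "B = transpose Q ** D ** Q" using assms(3) D_def by simp
  have "transpose (transpose Q) ** B ** transpose Q = D"
  proof -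
    have "transpose (transpose Q) ** B ** transpose Q = (Q ** transpose Q) ** D ** (Q ** transpose Q)"
      by (simp add: BD matrix_mul_assoc)
    then show ?thesis by (simp add: QQt)
  qed
  then have pdD: "pos_def_matrix D" using pd_congr[OF pdB invQt] by simp
  have bpos: "\<beta>$i > 0" for i using pd_diag_pos[OF pdD, of i] by (simp add: D_def diag_matrix_def)
  have trB: "trace B = (\<Sum>i\<in>UNIV. \<beta>$i)"
    using trace_conj[OF QQt, of D] by (simp add: BD D_def trace_diag)
  define f where "f = (\<lambda>l::real. \<Sum>i\<in>UNIV. 2 * \<beta> $ i / (1 + sqrt (1 - 4 * l * \<beta> $ i)))"
  have fl: "\<And>l. (\<Sum>i\<in>UNIV. 2 * \<beta> $ i / (1 + sqrt (1 - 4 * l * \<beta> $ i))) = f l"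
    by (simp add: f_def)
  have fmono: "f l1 < f l2" if "l1 < l2" "l2 \<le> 0" for l1 l2
    unfolding f_def by (rule sum_strict_mono) (use that bpos term_mono in auto)
  have f0: "f 0 = (\<Sum>i\<in>UNIV. \<beta>$i)" by (simp add: f_def)
  have ex: "\<exists>l. l \<le> 0 \<and> f l = c"
  proof -
    define T where "T = (\<Sum>i\<in>UNIV. \<beta>$i)"
    define N where "N = real CARD('n)"
    have Npos: "N > 0" by (simp add: N_def)
    define e where "e = c / N"
    have epos: "e > 0" using assms(5) Npos by (simp add: e_def)
    have Tpos: "T > 0" unfolding T_def by (rule sum_pos) (use bpos in auto)
    have bT: "\<beta>$i \<le> T" for i unfolding T_def
      by (rule member_le_sum) (use bpos less_imp_le in auto)
    define l0 where "l0 = - (T / e^2)"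
    have l0: "l0 \<le> 0" using Tpos epos by (simp add: l0_def)
    have tm: "2 * \<beta> $ i / (1 + sqrt (1 - 4 * l0 * \<beta> $ i)) \<le> e" for i
    proof -
      have b: "\<beta>$i > 0" by (rule bpos)
      have "(2 * \<beta>$i / e)^2 \<le> 1 - 4 * l0 * \<beta>$i"
      proof -
        have "(2 * \<beta>$i / e)^2 = 4 * (\<beta>$i * \<beta>$i) / e^2" by (simp add: power2_eq_square field_simps)
        also have "\<dots> \<le> 4 * (T * \<beta>$i) / e^2"
          using bT[of i] b epos by (intro divide_right_mono mult_left_mono mult_right_mono) auto
        also have "\<dots> = - 4 * l0 * \<beta>$i" using epos by (simp add: l0_def field_simps)
        finally show ?thesis by simp
      qed
      then have "2 * \<beta>$i / e \<le> sqrt (1 - 4 * l0 * \<beta>$i)" by (rule real_le_rsqrt)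
      then have h1: "2 * \<beta>$i \<le> e * sqrt (1 - 4 * l0 * \<beta>$i)" using epos by (simp add: field_simps)
      have h2: "sqrt (1 - 4 * l0 * \<beta>$i) \<ge> 0"
      proof -
        have "4 * l0 * \<beta>$i \<le> 0" using l0 b by (simp add: mult_le_0_iff)
        then show ?thesis by simp
      qed
      have "2 * \<beta>$i \<le> e * (1 + sqrt (1 - 4 * l0 * \<beta>$i))"
        using h1 epos by (simp add: distrib_left)
      moreover have "0 < 1 + sqrt (1 - 4 * l0 * \<beta>$i)" using h2 by linarith
      ultimately show ?thesis by (simp add: pos_divide_le_eq mult.commute)
    qed
    have "f l0 \<le> (\<Sum>i\<in>(UNIV::'n set). e)" unfolding f_def by (rule sum_mono) (rule tm)
    also have "\<dots> = c" using Npos by (simp add: e_def N_def)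
    finally have fl0: "f l0 \<le> c" .
    have cf0: "c \<le> f 0" using assms(6) trB f0 by simp
    have cont: "continuous_on {l0..0} f"
    proof -
      have nz: "1 + sqrt (1 - 4 * x * \<beta> $ i) \<noteq> 0" if "x \<in> {l0..0}" for x i
      proof -
        have "4 * x * \<beta>$i \<le> 0" using that bpos[of i] by (simp add: mult_le_0_iff)
        then have "sqrt (1 - 4 * x * \<beta> $ i) \<ge> 0" by simp
        then show ?thesis by linarith
      qed
      show ?thesis unfolding f_def
        by (intro continuous_intros) (use nz in auto)
    qed
    obtain l where "l0 \<le> l" "l \<le> 0" "f l = c" using IVT'[of f l0 c 0, OF fl0 cf0 l0 cont] by blast
    then show ?thesis by blast
  qed
  have part1: "\<exists>!l. l \<le> 0 \<and> f l = c"
  proof -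
    obtain l where l: "l \<le> 0" "f l = c" using ex by blast
    show ?thesis
    proof (rule ex1I[of _ l])
      show "l \<le> 0 \<and> f l = c" using l by simp
    next
      fix l' assume l': "l' \<le> 0 \<and> f l' = c"
      show "l' = l"
      proof (rule ccontr)
        assume "l' \<noteq> l"
        then consider "l' < l" | "l < l'" by linarith
        then show False
        proof cases
          case 1 then show False using fmono[of l' l] l l' by simp
        next
          case 2 then show False using fmono[of l l'] l l' by simp
        qed
      qed
    qed
  qed
  have part2: "pos_def_matrix (transpose Q ** diag_matrix (\<chi> i. alpha_star l (\<beta> $ i)) ** Q) \<and>
        trace (transpose Q ** diag_matrix (\<chi> i. alpha_star l (\<beta> $ i)) ** Q) = c \<and>
        (\<forall>G. pos_def_matrix G \<and> trace G = c \<longrightarrow>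
           obj B (transpose Q ** diag_matrix (\<chi> i. alpha_star l (\<beta> $ i)) ** Q) \<le> obj B G)"
    if l: "l \<le> 0" and fl_c: "f l = c" for l
  proof -
    have "(\<Sum>i\<in>UNIV. 2 * \<beta> $ i / (1 + sqrt (1 - 4 * l * \<beta> $ i))) = c"
      using fl_c by (simp add: f_def)
    from part2_lemma[OF QtQ QQt assms(3) bpos l this] show ?thesis .
  qed
  show ?thesis unfolding fl Let_def using part1 part2 by blast
qed

end
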